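(* Let $w$ be a string of length $n$ and $i$ a position of $w$ with $i-\mu(i)\ge1$, $i+\mu(i)-1\le n$ and $\mu(i)>1$. Suppose $j$ is an integer with $i<j<i+\mu(i)$ such that $\mu(j')<\mu(i)$ for each $j'$ with $i<j'\le j$. Then $w[j-\mu(j)..j+\mu(j)-1]$ is a substring of $w[i-\mu(i)..i+\mu(i)-1]$, in the sense that $i-\mu(i)\le j-\mu(j)$ and $j+\mu(j)\le i+\mu(i)$.
   Context: $w[a..b]=w[a]\cdots w[b]$. For a position $i\in\{1,\dots,n\}$ of $w$, the local period $\mu(i)$ is the least positive integer $\mu$ such that $w[j]=w[j+\mu]$ for all $j$ with $\max\{1,i-\mu\}\le j$ and $j+\mu\le\min\{n,i+\mu-1\}$. *)

theory Defs
  imports Main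
begin

(* 1-indexed character access: w[k] = w ! (k - 1) for 1 <= k <= length w *)
definition ch :: "'a list \<Rightarrow> nat \<Rightarrow> 'a" where
  "ch w k = w ! (k - 1)"

definition is_local_period :: "'a list \<Rightarrow> nat \<Rightarrow> nat \<Rightarrow> bool" where
  "is_local_period w i m \<longleftrightarrow> 0 < m \<and>
     (\<forall>j::int. max 1 (int i - int m) \<le> j \<and> j + int m \<le> min (int (length w)) (int i + int m - 1)
        \<longrightarrow> ch w (nat j) = ch w (nat (j + int m)))"

definition local_period :: "'a list \<Rightarrow> nat \<Rightarrow> nat" where
  "local_period w i = (LEAST m. is_local_period w i m)"

end

theory Submission imports Defs "HOL-Library.List_Lexorder" begin

lemma app_le_cancel: "(b @ g :: nat list) \<le> b @ g' \<Longrightarrow> g \<le> g'"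
  by (induct b) auto

lemma app_le_mono: "length g = length g' \<Longrightarrow> (g::nat list) \<le> g' \<Longrightarrow> g @ b \<le> g' @ b"
proof (induct g g' rule: list_induct2)
  case Nil then show ?case by simp
next
  case (Cons x xs y ys) then show ?case by auto
qed

lemma lex_less_index:
  fixes xs ys :: "nat list"
  assumes "length xs = length ys" "ix < length xs" "\<forall>t<ix. xs!t = ys!t" "xs!ix < ys!ix"
  shows "xs < ys"
proof -
  have "take ix xs = take ix ys"
    using assms by (intro nth_equalityI) auto
  then show ?thesis
    unfolding list_less_def lexord_take_index_conv using assms by auto
qed

lemma lyndon_rot:
  fixes xs :: "nat list"
  assumes "length xs = p" "0 < m" "m < p" "take m xs = drop (p-m) xs"
    "xs \<le> drop (p-m) xs @ take (p-m) xs" "xs \<le> drop m xs @ take m xs"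
  shows "xs = drop m xs @ take m xs"
proof -
  define b where "b = take m xs"
  define g where "g = drop m xs"
  define g' where "g' = take (p-m) xs"
  have x1: "xs = b @ g" unfolding b_def g_def by simp
  have x2: "xs = g' @ b" unfolding b_def g'_def using assms(4) by simp
  have e1: "drop (p-m) xs = b" using assms(4) b_def by simp
  have "xs \<le> b @ g'" using assms(5) by (simp only: e1 g'_def[symmetric])
  then have "b @ g \<le> b @ g'" by (simp only: x1[symmetric])
  then have "g \<le> g'" by (rule app_le_cancel)
  moreover have "length g = length g'" using assms(1,3) unfolding g_def g'_def by simp
  ultimately have "g @ b \<le> g' @ b" by (rule app_le_mono[rotated])
  moreover have "g @ b = drop m xs @ take m xs" by (simp add: b_def g_def)
  ultimately have "drop m xs @ take m xs \<le> xs" using x2 by simp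
  then show ?thesis using assms(6) by (rule antisym[rotated])
qed

lemma modB: "((c::int) + (z - a) mod p) mod p = (c - a + z) mod p"
proof -
  have "(c + (z - a) mod p) mod p = (c + (z - a)) mod p" by (rule mod_add_right_eq)
  then show ?thesis by (simp add: algebra_simps)
qed

lemma modC: "(c::int) mod p = c' mod p \<Longrightarrow> (c + t) mod p = (c' + t) mod p"
  by (metis mod_add_left_eq)

lemma ilp_D: "is_local_period w x m \<Longrightarrow> max 1 (int x - int m) \<le> z \<Longrightarrow>
   z + int m \<le> min (int (length w)) (int x + int m - 1) \<Longrightarrow> ch w (nat z) = ch w (nat (z + int m))"
  by (simp add: is_local_period_def)

lemma ilp_I: "0 < m \<Longrightarrow> (\<And>z. max 1 (int x - int m) \<le> z \<Longrightarrow>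
   z + int m \<le> min (int (length w)) (int x + int m - 1) \<Longrightarrow> ch w (nat z) = ch w (nat (z + int m)))
   \<Longrightarrow> is_local_period w x m"
  by (simp add: is_local_period_def)

lemma ilp_len: "0 < length w \<Longrightarrow> is_local_period w x (length w)"
  by (rule ilp_I) auto

lemma lp_is: "0 < length w \<Longrightarrow> is_local_period w x (local_period w x)"
  unfolding local_period_def using ilp_len[of w x] by (metis LeastI)

lemma lp_le: "is_local_period w x m \<Longrightarrow> local_period w x \<le> m"
  unfolding local_period_def by (rule Least_le)

lemma lp_pos: "0 < length w \<Longrightarrow> 0 < local_period w x"
  using lp_is[of w x] by (simp add: is_local_period_def)

lemma main:
  fixes w :: "'a list" and i :: nat
  defines "n \<equiv> length w" and "p \<equiv> local_period w i"
  assumes i1: "1 \<le> i" and i2: "i \<le> n" and h3: "int i - int p \<ge> 1"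
    and h4: "int i + int p - 1 \<le> int n" and h5: "p > 1"
  shows "i < j \<Longrightarrow> j < i + p \<Longrightarrow> (\<forall>j'. i < j' \<and> j' \<le> j \<longrightarrow> local_period w j' < p)
         \<Longrightarrow> j + local_period w j \<le> i + p"
proof -
  have n0: "0 < length w" using i1 i2 unfolding n_def by linarith
  have Pi: "is_local_period w i p" unfolding p_def by (rule lp_is[OF n0])
  define V where "V z = ch w (nat (int i + z mod int p))" for z
  have Vmod: "V z = V z'" if "z mod int p = z' mod int p" for z z'
    unfolding V_def using that by simp
  have Vper: "V (z + int p) = V z" for z by (rule Vmod) simp
  have Vw: "ch w (nat (int i + z)) = V z" if "- int p \<le> z" "z < int p" for z
  proof (cases "z \<ge> 0")
    case True
    then have "z mod int p = z" using that by simp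
    then show ?thesis unfolding V_def by simp
  next
    case False
    have "(z + int p) mod int p = z + int p"
      by (rule mod_pos_pos_trivial) (use that False in auto)
    then have zm: "z mod int p = z + int p" by simp
    have "ch w (nat (int i + z)) = ch w (nat (int i + z + int p))"
      by (rule ilp_D[OF Pi]) (use that False h3 h4 n_def in auto)
    then show ?thesis unfolding V_def zm by (simp add: add.assoc)
  qed
  have Vin: "V z \<in> set w" for z
  proof -
    have a: "0 \<le> z mod int p" "z mod int p < int p" using h5 by auto
    have "V z = w ! (nat (int i + z mod int p) - 1)" unfolding V_def ch_def ..
    moreover have "nat (int i + z mod int p) - 1 < length w" using a h4 i1 n_def by linarith
    ultimately show ?thesis by simp
  qed
  have BORDER: False if m0: "0 < m'" and m1: "m' < p"
    and sq: "\<forall>r. 0 \<le> r \<and> r < int m' \<longrightarrow> V (r - int m') = V r" for m'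
  proof -
    have "is_local_period w i m'"
    proof (rule ilp_I[OF m0])
      fix z assume z1: "max 1 (int i - int m') \<le> z"
        and z2: "z + int m' \<le> min (int (length w)) (int i + int m' - 1)"
      define r where "r = z - (int i - int m')"
      have r: "0 \<le> r" "r < int m'" using z1 z2 r_def by auto
      have "ch w (nat z) = V (r - int m')"
        using Vw[of "r - int m'"] r m1 r_def by simp
      moreover have "ch w (nat (z + int m')) = V r"
        using Vw[of r] r m1 r_def by simp
      ultimately show "ch w (nat z) = ch w (nat (z + int m'))" using sq r by simp
    qed
    then have "p \<le> m'" unfolding p_def by (rule lp_le)
    then show False using m1 by simp
  qed
  show "i < j \<Longrightarrow> j < i + p \<Longrightarrow> (\<forall>j'. i < j' \<and> j' \<le> j \<longrightarrow> local_period w j' < p)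
         \<Longrightarrow> j + local_period w j \<le> i + p"
  proof (induction j rule: less_induct)
    case (less j)
    define q where "q = local_period w j"
    have q0: "0 < q" unfolding q_def by (rule lp_pos[OF n0])
    have qp: "q < p" using less.prems(3) less.prems(1) q_def by auto
    have Qj: "is_local_period w j q" unfolding q_def by (rule lp_is[OF n0])
    show ?case
    proof (rule ccontr)
      assume viol: "\<not> j + local_period w j \<le> i + p"
      then have viol': "int j + int q > int i + int p" using q_def by simp
      define d where "d = int j - int i"
      have d0: "0 < d" "d < int p" using less.prems d_def by auto
      have dq: "d + int q > int p" using viol' d_def by simp
      have QP: "V y = V (y + int q)" if "d - int q \<le> y" "y \<le> int p - 1 - int q" for y
      proof -
        have "ch w (nat (int i + y)) = ch w (nat (int i + y + int q))"
          by (rule ilp_D[OF Qj]) (use that d_def dq h3 h4 n_def qp in auto)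
        moreover have "ch w (nat (int i + y)) = V y" using Vw[of y] that d0 qp by simp
        moreover have "ch w (nat (int i + (y + int q))) = V (y + int q)"
          using Vw[of "y + int q"] that d0 qp by simp
        ultimately show ?thesis by (simp add: add.assoc)
      qed
      have dq1: "d - int q \<ge> 1"
      proof (rule ccontr)
        assume "\<not> d - int q \<ge> 1"
        then have dle: "d - int q \<le> 0" by simp
        show False
        proof (rule BORDER[of "p - q"])
          show "0 < p - q" "p - q < p" using qp q0 by auto
          show "\<forall>r. 0 \<le> r \<and> r < int (p - q) \<longrightarrow> V (r - int (p - q)) = V r"
          proof (intro allI impI)
            fix r assume r: "0 \<le> r \<and> r < int (p - q)"
            have "V (r - int (p - q)) = V (r - int (p - q) + int p)" by (rule Vper[symmetric])
            also have "\<dots> = V (r + int q)" using qp by (simp add: of_nat_diff)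
            also have "\<dots> = V r" using QP[of r] r dle qp by (simp add: of_nat_diff)
            finally show "V (r - int (p - q)) = V r" .
          qed
        qed
      qed
      have mism: "\<exists>t. t < p \<and> V (d + int t) \<noteq> V (d + int t - int q)"
      proof (rule ccontr)
        assume "\<not> ?thesis"
        then have all: "\<forall>t<p. V (d + int t) = V (d + int t - int q)" by auto
        have allz: "V z = V (z - int q)" for z
        proof -
          define t where "t = nat ((z - d) mod int p)"
          have t: "t < p" "int t = (z - d) mod int p" using h5 t_def
            by (auto simp: nat_less_iff)
          have "V z = V (d + int t)" by (rule Vmod) (simp add: t mod_add_right_eq)
          also have "\<dots> = V (d + int t - int q)" using all t(1) by blast
          also have "\<dots> = V (z - int q)" by (rule Vmod)
              (metis t(2) modB[of "d - int q" z d "int p"] add.commute add_diff_eq diff_add_cancel)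
          finally show ?thesis .
        qed
        show False
          by (rule BORDER[OF q0 qp]) (use allz in \<open>metis add_diff_cancel_left' diff_add_cancel\<close>)
      qed
      define t0 where "t0 = (LEAST t. t < p \<and> V (d + int t) \<noteq> V (d + int t - int q))"
      have t0: "t0 < p" "V (d + int t0) \<noteq> V (d + int t0 - int q)"
        using LeastI_ex[OF mism] t0_def by auto
      have t0b: "V (d + int t) = V (d + int t - int q)" if "t < t0" for t
        using not_less_Least[of t "\<lambda>t. t < p \<and> V (d + int t) \<noteq> V (d + int t - int q)"]
          that t0 t0_def by auto
      define k0 where "k0 = d + int t0"
      have k0p: "k0 \<ge> int p"
      proof (rule ccontr)
        assume "\<not> k0 \<ge> int p"
        then have "V (k0 - int q) = V (k0 - int q + int q)"
          using QP[of "k0 - int q"] k0_def by simp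
        then show False using t0 k0_def by simp
      qed
      define b1 where "b1 = V k0"
      define b2 where "b2 = V (k0 - int q)"
      have b12: "b1 \<noteq> b2" using t0 k0_def b1_def b2_def by simp
      define f where "f x = (LEAST t. w ! t = x)" for x
      define rk where "rk x = (if x = b2 then 0 else if x = b1 then 1
                               else Suc (Suc (f x)))" for x
      have rk2: "rk b2 = 0" unfolding rk_def by simp
      have rk1: "rk b1 = 1" unfolding rk_def using b12 by simp
      have rk_inj: "x = y" if "x \<in> set w" "y \<in> set w" "rk x = rk y" for x y
      proof -
        have ex: "\<exists>t. w ! t = z" if "z \<in> set w" for z using that by (metis in_set_conv_nth)
        have fx: "w ! f x = x" unfolding f_def using LeastI_ex[OF ex[OF that(1)]] .
        have fy: "w ! f y = y" unfolding f_def using LeastI_ex[OF ex[OF that(2)]] .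
        have r0: "rk z = 0 \<longleftrightarrow> z = b2" for z unfolding rk_def by simp
        have r1: "rk z = 1 \<longleftrightarrow> z = b1" for z unfolding rk_def using b12 by simp
        have r2: "rk z = Suc (Suc (f z))" if "z \<noteq> b1" "z \<noteq> b2" for z
          unfolding rk_def using that by simp
        show ?thesis
        proof (cases "x = b2")
          case True then show ?thesis using r0 that(3) by metis
        next
          case nx2: False
          show ?thesis
          proof (cases "x = b1")
            case True then show ?thesis using r1 that(3) by metis
          next
            case nx1: False
            have ny2: "y \<noteq> b2" using r0 that(3) nx2 by metis
            have ny1: "y \<noteq> b1" using r1 that(3) nx1 by metis
            have "f x = f y" using that(3) r2[OF nx1 nx2] r2[OF ny1 ny2] by simp
            then show ?thesis using fx fy by metis
          qed
        qed
      qed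
      define R where "R c = map (\<lambda>t. rk (V (c + int t))) [0..<p]" for c
      have Rlen: "length (R c) = p" for c unfolding R_def by simp
      have Rnth: "R c ! t = rk (V (c + int t))" if "t < p" for c t
        unfolding R_def using that by simp
      have Rmod: "R c = R c'" if "c mod int p = c' mod int p" for c c'
        unfolding R_def
        by (rule map_cong[OF refl], rule arg_cong[where f=rk], rule Vmod, rule modC[OF that])
      have Rlt: "R (k - int q) < R k" if "d \<le> k" "k \<le> int p" for k
      proof (rule lex_less_index[where ix="nat (k0 - k)"])
        show "length (R (k - int q)) = length (R k)" by (simp add: Rlen)
        show r0p: "nat (k0 - k) < length (R (k - int q))" using Rlen that k0_def t0 k0p by auto
        show "\<forall>t<nat (k0 - k). R (k - int q) ! t = R k ! t"
        proof (intro allI impI)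
          fix t assume t: "t < nat (k0 - k)"
          have tp: "t < p" using t r0p Rlen by simp
          have "V (d + int (nat (k + int t - d))) = V (d + int (nat (k + int t - d)) - int q)"
            by (rule t0b) (use t that k0_def in auto)
          then have "V (k + int t) = V (k + int t - int q)" using that by simp
          then show "R (k - int q) ! t = R k ! t" using Rnth tp by (simp add: algebra_simps)
        qed
        have tp: "nat (k0 - k) < p" using r0p Rlen by simp
        have "R (k - int q) ! nat (k0 - k) = rk b2"
          using Rnth[OF tp] k0p that b2_def by (simp add: algebra_simps)
        moreover have "R k ! nat (k0 - k) = rk b1"
          using Rnth[OF tp] k0p that b1_def by simp
        ultimately show "R (k - int q) ! nat (k0 - k) < R k ! nat (k0 - k)"
          using rk1 rk2 by simp
      qed
      define Sset where "Sset = R ` {0..<int p}"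
      have Sfin: "finite Sset" "Sset \<noteq> {}" using h5 Sset_def by auto
      obtain l where l: "l \<in> {0..<int p}" "R l = Min Sset"
        using Min_in[OF Sfin] Sset_def by auto
      have Rmin: "R l \<le> R c" for c
      proof -
        have "R c = R (c mod int p)" by (rule Rmod) simp
        moreover have "c mod int p \<in> {0..<int p}" using h5 by simp
        ultimately show ?thesis using l Min_le[OF Sfin(1)] Sset_def by auto
      qed
      have l1: "l \<ge> 1"
      proof (rule ccontr)
        assume "\<not> l \<ge> 1"
        then have l0: "l = 0" using l by simp
        have "R (int p - int q) < R (int p)" using Rlt[of "int p"] d0 by simp
        also have "R (int p) = R l" using l0 by (intro Rmod) simp
        finally show False using Rmin[of "int p - int q"] by simp
      qed
      have ld: "l < d"
      proof (rule ccontr)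
        assume "\<not> l < d"
        then have "R (l - int q) < R l" using Rlt[of l] l by simp
        then show False using Rmin[of "l - int q"] by simp
      qed
      define j' where "j' = i + nat l"
      have j'1: "i < j'" "j' < j" using l1 ld j'_def d_def by auto
      define m where "m = local_period w j'"
      have mp: "m < p" using less.prems(3) j'1 m_def by auto
      have m0: "0 < m" unfolding m_def by (rule lp_pos[OF n0])
      have IH: "j' + m \<le> i + p"
        using less.IH[OF j'1(2) j'1(1)] less.prems j'1 m_def by auto
      have Mj: "is_local_period w j' m" unfolding m_def by (rule lp_is[OF n0])
      have SQ: "V (l - int m + r) = V (l + r)" if "0 \<le> r" "r < int m" for r
      proof -
        have "ch w (nat (int j' - int m + r)) = ch w (nat (int j' - int m + r + int m))"
          by (rule ilp_D[OF Mj]) (use that IH h3 h4 n_def mp l j'_def in auto)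
        moreover have "ch w (nat (int i + (l - int m + r))) = V (l - int m + r)"
          using Vw[of "l - int m + r"] that mp l ld d0 by simp
        moreover have "ch w (nat (int i + (l + r))) = V (l + r)"
          using Vw[of "l + r"] that IH l j'_def by simp
        ultimately show ?thesis using l j'_def by (simp add: algebra_simps)
      qed
      have Rrot: "drop t (R c) @ take t (R c) = R (c + int t)" if "t \<le> p" for t c
      proof (rule nth_equalityI)
        show "length (drop t (R c) @ take t (R c)) = length (R (c + int t))"
          using that by (simp add: Rlen)
        fix r assume r: "r < length (drop t (R c) @ take t (R c))"
        then have rp: "r < p" using that by (simp add: Rlen)
        show "(drop t (R c) @ take t (R c)) ! r = R (c + int t) ! r"
        proof (cases "r < p - t")
          case True
          then show ?thesis using Rnth rp that by (simp add: nth_append Rlen algebra_simps)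
        next
          case False
          then have "(drop t (R c) @ take t (R c)) ! r = R c ! (r - (p - t))"
            using rp that by (simp add: nth_append Rlen)
          also have "\<dots> = rk (V (c + int (r - (p - t))))" using Rnth rp that False by simp
          also have "\<dots> = rk (V (c + int t + int r))"
          proof -
            have "c + int t + int r = c + int (r - (p - t)) + int p"
              using False that rp by (simp add: of_nat_diff)
            then show ?thesis by (simp only: Vper)
          qed
          also have "\<dots> = R (c + int t) ! r" using Rnth rp by simp
          finally show ?thesis .
        qed
      qed
      have bord: "take m (R l) = drop (p - m) (R l)"
      proof (rule nth_equalityI)
        show "length (take m (R l)) = length (drop (p - m) (R l))" using mp by (simp add: Rlen)
        fix r assume r: "r < length (take m (R l))"
        then have rm: "r < m" using mp by (simp add: Rlen)
        have "take m (R l) ! r = rk (V (l + int r))" using Rnth rm mp by simp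
        also have "\<dots> = rk (V (l - int m + int r))" using SQ[of "int r"] rm by simp
        also have "\<dots> = rk (V (l + int (p - m + r)))"
        proof -
          have "l + int (p - m + r) = l - int m + int r + int p" using mp by (simp add: of_nat_diff)
          then show ?thesis by (simp only: Vper)
        qed
        also have "\<dots> = drop (p - m) (R l) ! r" using Rnth rm mp by (simp add: Rlen)
        finally show "take m (R l) ! r = drop (p - m) (R l) ! r" .
      qed
      have eq: "R l = drop m (R l) @ take m (R l)"
        by (rule lyndon_rot[OF Rlen m0 mp bord])
           (use Rmin Rrot mp in \<open>simp_all\<close>)
      then have eq2: "R l = R (l + int m)" using Rrot[of m l] mp by simp
      have per: "V (l + int r) = V (l + int m + int r)" if "r < p" for r
      proof (rule rk_inj[OF Vin Vin])
        show "rk (V (l + int r)) = rk (V (l + int m + int r))"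
          using arg_cong[OF eq2, of "\<lambda>xs. xs ! r"] Rnth that by simp
      qed
      have perz: "V (z + int m) = V z" for z
      proof -
        define t where "t = nat ((z - l) mod int p)"
        have t: "t < p" "int t = (z - l) mod int p" using h5 t_def by (auto simp: nat_less_iff)
        have "V z = V (l + int t)" by (rule Vmod) (simp add: t mod_add_right_eq)
        also have "\<dots> = V (l + int m + int t)" by (rule per[OF t(1)])
        also have "\<dots> = V (z + int m)" by (rule Vmod)
            (metis t(2) modB[of "l + int m" z l "int p"] add.commute add_diff_eq diff_add_cancel)
        finally show ?thesis by simp
      qed
      show False
        by (rule BORDER[OF m0 mp]) (use perz in \<open>metis diff_add_cancel\<close>)
    qed
  qed
qed

theorem lemma14:
  fixes w :: "'a list" and i j :: nat
  defines "n \<equiv> length w"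
  assumes "1 \<le> i" and "i \<le> n"
    and "int i - int (local_period w i) \<ge> 1"
    and "int i + int (local_period w i) - 1 \<le> int n"
    and "local_period w i > 1"
    and "i < j" and "j < i + local_period w i"
    and "\<forall>j'. i < j' \<and> j' \<le> j \<longrightarrow> local_period w j' < local_period w i"
  shows "int i - int (local_period w i) \<le> int j - int (local_period w j)
       \<and> int j + int (local_period w j) \<le> int i + int (local_period w i)"
proof -
  have a: "j + local_period w j \<le> i + local_period w i"
    using main[of i w j] assms unfolding n_def by blast
  have b: "local_period w j < local_period w i" using assms(7,9) by blast
  show ?thesis using a b assms(7) by linarith
qed

end
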